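(* Let the standing assumptions and Assumption 1 hold, let $(\mathbf{x}^*,\mathbf{z}^*,\mathbf{y}^* )$ be a KKT point, let $\gamma>0$, let $c_1,c_2>0$ be constants and $T\ge1$, and run generalized Bregman ADMM with $\rho=\sqrt T$, $\rho_{\mathbf{x}}=\rho_{\mathbf{z}}=c_1\sqrt T$, $\tau=c_2\sqrt T$. Suppose $\|\mathbf{y}_t\|_2\le D_{\mathbf{y}}$ for all $t$. Then $$\sum_{t=0}^{T-1}R(t+1)\le D(\mathbf{w}^*,\mathbf{w}_0)+\frac{4(c_2/2+\gamma)D_{\mathbf{y}}^2}{c_2^2},$$ where here $R(t+1)=c_1B_{\varphi_{\mathbf{x}}}(\mathbf{x}_{t+1},\mathbf{x}_t)+c_1B_{\varphi_{\mathbf{z}}}(\mathbf{z}_{t+1},\mathbf{z}_t)+B_\phi(\mathbf{c}-\mathbf{A}\mathbf{x}_{t+1},\mathbf{B}\mathbf{z}_t)+\gamma\|\mathbf{A}\mathbf{x}_{t+1}+\mathbf{B}\mathbf{z}_{t+1}-\mathbf{c}\|_2^2$ and $D(\mathbf{w}^*,\mathbf{w}_0)=\frac{1}{2c_2T}\|\mathbf{y}^*-\mathbf{y}_0\|_2^2+B_\phi(\mathbf{B}\mathbf{z}^*,\mathbf{B}\mathbf{z}_0)+c_1B_{\varphi_{\mathbf{x}}}(\mathbf{x}^*,\mathbf{x}_0)+c_1B_{\varphi_{\mathbf{z}}}(\mathbf{z}^*,\mathbf{z}_0)$; in particular the right-hand side is bounded independently of $T$ (the paper phrases this as: $R(t+1)$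 converges to zero).
   Context: Problem: $f:\mathbb{R}^{n_1}\to\mathbb{R}\cup\{+\infty\}$ and $g:\mathbb{R}^{n_2}\to\mathbb{R}\cup\{+\infty\}$; $\mathbf{A}\in\mathbb{R}^{m\times n_1}$, $\mathbf{B}\in\mathbb{R}^{m\times n_2}$, $\mathbf{c}\in\mathbb{R}^m$; $\mathcal{X}\subseteq\mathbb{R}^{n_1}$, $\mathcal{Z}\subseteq\mathbb{R}^{n_2}$ convex; the problem is $\min f(\mathbf{x})+g(\mathbf{z})$ s.t. $\mathbf{x}\in\mathcal{X},\mathbf{z}\in\mathcal{Z},\mathbf{A}\mathbf{x}+\mathbf{B}\mathbf{z}=\mathbf{c}$. For a continuously differentiable, strictly convex function $\psi$ on (the relative interior of) a convex set, $B_\psi(\mathbf{u},\mathbf{v})=\psi(\mathbf{u})-\psi(\mathbf{v})-\langle\nabla\psi(\mathbf{v}),\mathbf{u}-\mathbf{v}\rangle\ge 0$. Three such functions are fixed: $\phi$ (on a convex subset of $\mathbb{R}^m$), $\varphi_{\mathbf{x}}$, $\varphi_{\mathbf{z}}$. Generalized Bregman ADMM: given $(\mathbf{x}_0,\mathbf{z}_0,\mathbf{y}_0)$ and parameters $\rho>0,\tau>0,\rho_{\mathbf{x}}\ge0,\rho_{\mathbf{z}}\ge0$, for $t\ge0$: $\mathbf{x}_{t+1}=\arg\min_{\mathbf{x}\in\mathcal{X}} f(\mathbf{x})+\langle\mathbf{y}_t,\mathbf{A}\mathbf{x}+\mathbf{B}\mathbf{z}_t-\mathbf{c}\rangle+\rho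 B_\phi(\mathbf{c}-\mathbf{A}\mathbf{x},\mathbf{B}\mathbf{z}_t)+\rho_{\mathbf{x}}B_{\varphi_{\mathbf{x}}}(\mathbf{x},\mathbf{x}_t)$; $\mathbf{z}_{t+1}=\arg\min_{\mathbf{z}\in\mathcal{Z}} g(\mathbf{z})+\langle\mathbf{y}_t,\mathbf{A}\mathbf{x}_{t+1}+\mathbf{B}\mathbf{z}-\mathbf{c}\rangle+\rho B_\phi(\mathbf{B}\mathbf{z},\mathbf{c}-\mathbf{A}\mathbf{x}_{t+1})+\rho_{\mathbf{z}}B_{\varphi_{\mathbf{z}}}(\mathbf{z},\mathbf{z}_t)$; $\mathbf{y}_{t+1}=\mathbf{y}_t+\tau(\mathbf{A}\mathbf{x}_{t+1}+\mathbf{B}\mathbf{z}_{t+1}-\mathbf{c})$. Standing assumptions: the minimizers exist; all Bregman divergences are evaluated at points where they are defined; and the minimizers satisfy the first-order optimality conditions $-\mathbf{A}^T\{\mathbf{y}_t+\rho(\nabla\phi(\mathbf{B}\mathbf{z}_t)-\nabla\phi(\mathbf{c}-\mathbf{A}\mathbf{x}_{t+1}))\}-\rho_{\mathbf{x}}(\nabla\varphi_{\mathbf{x}}(\mathbf{x}_{t+1})-\nabla\varphi_{\mathbf{x}}(\mathbf{x}_t))\in\partial f(\mathbf{x}_{t+1})$ and $-\mathbf{B}^T\{\mathbf{y}_t+\rho(\nabla\phi(\mathbf{B}\mathbf{z}_{t+1})-\nabla\phi(\mathbf{c}-\mathbf{A}\mathbf{x}_{t+1}))\}-\rho_{\mathbf{z}}(\nabla\varphi_{\mathbf{z}}(\mathbf{z}_{t+1})-\nabla\varphi_{\mathbf{z}}(\mathbf{z}_t))\in\partial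 g(\mathbf{z}_{t+1})$. Assumption 1: (a) $f,g$ are closed, proper, convex; (b) an optimal solution exists; (c) $B_\phi(\mathbf{u},\mathbf{v})\ge\frac{\alpha}{2}\|\mathbf{u}-\mathbf{v}\|_p^2$ for some $\alpha>0$, $p>0$. A KKT point is $(\mathbf{x}^*,\mathbf{z}^*,\mathbf{y}^* )$ with $-\mathbf{A}^T\mathbf{y}^*\in\partial f(\mathbf{x}^* )$, $-\mathbf{B}^T\mathbf{y}^*\in\partial g(\mathbf{z}^* )$, $\mathbf{A}\mathbf{x}^*+\mathbf{B}\mathbf{z}^*=\mathbf{c}$; $\mathbf{w}_t=(\mathbf{x}_t,\mathbf{z}_t,\mathbf{y}_t)$, $\mathbf{w}^*=(\mathbf{x}^*,\mathbf{z}^*,\mathbf{y}^* )$. *)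

theory Defs
  imports "HOL-Analysis.Analysis"
begin

definition strictly_convex_on :: "'a::real_vector set \<Rightarrow> ('a \<Rightarrow> real) \<Rightarrow> bool" where
  "strictly_convex_on S f \<longleftrightarrow> convex_on S f \<and>
     (\<forall>x\<in>S. \<forall>y\<in>S. \<forall>t. x \<noteq> y \<and> 0 < t \<and> t < 1 \<longrightarrow>
        f ((1 - t) *\<^sub>R x + t *\<^sub>R y) < (1 - t) * f x + t * f y)"

definition bregman_gen :: "('a::euclidean_space \<Rightarrow> real) \<Rightarrow> ('a \<Rightarrow> 'a) \<Rightarrow> 'a set \<Rightarrow> bool" where
  "bregman_gen psi grad S \<longleftrightarrow> convex S \<and> strictly_convex_on S psi \<and>
     (\<forall>v\<in>rel_interior S. (psi has_derivative (\<lambda>h. grad v \<bullet> h)) (at v within S)) \<and>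
     continuous_on (rel_interior S) grad"

definition bregman :: "('a::real_inner \<Rightarrow> real) \<Rightarrow> ('a \<Rightarrow> 'a) \<Rightarrow> 'a \<Rightarrow> 'a \<Rightarrow> real" where
  "bregman psi grad u v = psi u - psi v - grad v \<bullet> (u - v)"

definition pnorm :: "real \<Rightarrow> real^'m \<Rightarrow> real" where
  "pnorm p u = (\<Sum>i\<in>UNIV. \<bar>u $ i\<bar> powr p) powr (1 / p)"

definition proper_fun :: "('a \<Rightarrow> ereal) \<Rightarrow> bool" where
  "proper_fun f \<longleftrightarrow> (\<forall>x. f x \<noteq> -\<infinity>) \<and> (\<exists>x. f x < \<infinity>)"

definition epi :: "('a \<Rightarrow> ereal) \<Rightarrow> ('a \<times> real) set" where
  "epi f = {(x, r). f x \<le> ereal r}"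

definition convex_fun :: "('a::real_vector \<Rightarrow> ereal) \<Rightarrow> bool" where
  "convex_fun f \<longleftrightarrow> convex (epi f)"

definition closed_fun :: "('a::topological_space \<Rightarrow> ereal) \<Rightarrow> bool" where
  "closed_fun f \<longleftrightarrow> closed (epi f)"

definition subdiff :: "('a::real_inner \<Rightarrow> ereal) \<Rightarrow> 'a \<Rightarrow> 'a set" where
  "subdiff f x = {s. f x < \<infinity> \<and> (\<forall>u. f x + ereal (s \<bullet> (u - x)) \<le> f u)}"

end

theory Submission
  imports Defs
begin


lemma bregman_nonneg:
  fixes psi :: "'a::euclidean_space \<Rightarrow> real"
  assumes gen: "bregman_gen psi grad S" and uS: "u \<in> S" and vS': "v \<in> rel_interior S"
  shows "bregman psi grad u v \<ge> 0"
proof -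
  from gen have cvx: "convex S" and cvf: "convex_on S psi"
    and d: "(psi has_derivative (\<lambda>h. grad v \<bullet> h)) (at v within S)"
    using vS' by (auto simp: bregman_gen_def strictly_convex_on_def)
  have vS: "v \<in> S" using vS' rel_interior_subset by blast
  define p where "p = (\<lambda>s::real. v + s *\<^sub>R (u - v))"
  have peq: "p s = (1 - s) *\<^sub>R v + s *\<^sub>R u" for s
    by (simp add: p_def algebra_simps)
  have pS: "p ` {0..1} \<subseteq> S"
    using cvx uS vS by (auto simp: peq intro!: convexD_alt)
  have dp: "(p has_derivative (\<lambda>s. s *\<^sub>R (u - v))) (at 0 within {0..1})"
    unfolding p_def by (auto intro!: derivative_eq_intros)
  have p0: "p 0 = v" by (simp add: p_def)
  have d2: "(psi has_derivative (\<lambda>h. grad v \<bullet> h)) (at (p 0) within p ` {0..1})"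
    using has_derivative_subset[OF d pS] p0 by simp
  have "((\<lambda>s. psi (p s)) has_derivative (\<lambda>s. grad v \<bullet> (s *\<^sub>R (u - v)))) (at 0 within {0..1})"
    by (rule has_derivative_in_compose[OF dp d2])
  hence "((\<lambda>s. psi (p s)) has_field_derivative (grad v \<bullet> (u - v))) (at 0 within {0..1})"
    proof -
    assume h: "((\<lambda>s. psi (p s)) has_derivative (\<lambda>s. grad v \<bullet> (s *\<^sub>R (u - v)))) (at 0 within {0..1})"
    have "(\<lambda>s. grad v \<bullet> (s *\<^sub>R (u - v))) = (*) (grad v \<bullet> (u - v))" by (auto simp: fun_eq_iff)
    with h show ?thesis unfolding has_field_derivative_def by simp
  qed
  hence lim: "((\<lambda>s. (psi (p s) - psi (p 0)) / (s - 0)) \<longlongrightarrow> grad v \<bullet> (u - v)) (at_right 0)"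
    unfolding has_field_derivative_iff at_within_Icc_at_right[OF zero_less_one] .
  have ev: "eventually (\<lambda>s. (psi (p s) - psi (p 0)) / (s - 0) \<le> psi u - psi v) (at_right (0::real))"
    using eventually_at_right_real[OF zero_less_one]
  proof eventually_elim
    case (elim s)
    then have s: "0 < s" "s < 1" by auto
    have "psi (p s) \<le> (1 - s) * psi v + s * psi u"
      unfolding peq using s uS vS by (intro convex_onD[OF cvf]) auto
    hence "psi (p s) - psi v \<le> s * (psi u - psi v)" by (simp add: algebra_simps)
    thus ?case using s p0 by (simp add: divide_le_eq mult.commute)
  qed
  have "grad v \<bullet> (u - v) \<le> psi u - psi v"
    by (rule tendsto_upperbound[OF lim ev]) simp
  thus ?thesis by (simp add: bregman_def)
qed


lemma subdiff_pair:
  assumes "s \<in> subdiff f p" "s' \<in> subdiff f q" "\<forall>u. f u \<noteq> -\<infinity>"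
  shows "s \<bullet> (q - p) + s' \<bullet> (p - q) \<le> 0"
proof -
  from assms have a: "f p < \<infinity>" "f p + ereal (s \<bullet> (q - p)) \<le> f q"
    and b: "f q < \<infinity>" "f q + ereal (s' \<bullet> (p - q)) \<le> f p"
    by (auto simp: subdiff_def)
  obtain P where P: "f p = ereal P" using a(1) assms(3) by (cases "f p") auto
  obtain Q where Q: "f q = ereal Q" using b(1) assms(3) by (cases "f q") auto
  show ?thesis using a(2) b(2) P Q by simp
qed

lemma three_point:
  "(grad b - grad a) \<bullet> (u - a) = bregman psi grad u a + bregman psi grad a b - bregman psi grad u b"
  by (simp add: bregman_def inner_diff_left inner_diff_right algebra_simps)

lemma transp_inner: "(transpose M *v v) \<bullet> w = v \<bullet> (M *v (w::real^_))"
  by (simp add: dot_lmul_matrix)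

theorem theorem3:
  fixes f :: "real^'n1 \<Rightarrow> ereal" and g :: "real^'n2 \<Rightarrow> ereal"
    and A :: "real^'n1^'m" and B :: "real^'n2^'m" and c :: "real^'m"
    and X :: "(real^'n1) set" and Z :: "(real^'n2) set"
    and phi :: "real^'m \<Rightarrow> real" and gphi :: "real^'m \<Rightarrow> real^'m" and Sphi :: "(real^'m) set"
    and phix :: "real^'n1 \<Rightarrow> real" and gphix :: "real^'n1 \<Rightarrow> real^'n1" and Sx :: "(real^'n1) set"
    and phiz :: "real^'n2 \<Rightarrow> real" and gphiz :: "real^'n2 \<Rightarrow> real^'n2" and Sz :: "(real^'n2) set"
    and x :: "nat \<Rightarrow> real^'n1" and z :: "nat \<Rightarrow> real^'n2" and y :: "nat \<Rightarrow> real^'m"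
    and xs :: "real^'n1" and zs :: "real^'n2" and ys :: "real^'m"
    and \<gamma> c1 c2 Dy \<rho> \<rho>x \<rho>z \<tau> :: real and T :: nat
  assumes convX: "convex X" and convZ: "convex Z"
    and gen_phi: "bregman_gen phi gphi Sphi"
    and gen_phix: "bregman_gen phix gphix Sx"
    and gen_phiz: "bregman_gen phiz gphiz Sz"
    \<comment> \<open>Assumption 1\<close>
    and f_cpc: "closed_fun f \<and> proper_fun f \<and> convex_fun f"
    and g_cpc: "closed_fun g \<and> proper_fun g \<and> convex_fun g"
    and opt_exists: "\<exists>xo\<in>X. \<exists>zo\<in>Z. A *v xo + B *v zo = c \<and>
        (\<forall>x'\<in>X. \<forall>z'\<in>Z. A *v x' + B *v z' = c \<longrightarrow> f xo + g zo \<le> f x' + g z')"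
    and strong_phi: "\<exists>\<alpha>>0. \<exists>p>0. \<forall>u\<in>Sphi. \<forall>v\<in>rel_interior Sphi.
        bregman phi gphi u v \<ge> \<alpha> / 2 * (pnorm p (u - v))\<^sup>2"
    \<comment> \<open>KKT point\<close>
    and kkt_f: "- (transpose A *v ys) \<in> subdiff f xs"
    and kkt_g: "- (transpose B *v ys) \<in> subdiff g zs"
    and kkt_feas: "A *v xs + B *v zs = c"
    \<comment> \<open>parameters\<close>
    and \<gamma>_pos: "\<gamma> > 0" and c1_pos: "c1 > 0" and c2_pos: "c2 > 0" and T_ge: "T \<ge> 1"
    and \<rho>_def: "\<rho> = sqrt (real T)" and \<rho>x_def: "\<rho>x = c1 * sqrt (real T)"
    and \<rho>z_def: "\<rho>z = c1 * sqrt (real T)" and \<tau>_def: "\<tau> = c2 * sqrt (real T)"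
    \<comment> \<open>Bregman divergences are evaluated where they are defined\<close>
    and dom_x: "\<And>t. x t \<in> rel_interior Sx"
    and dom_z: "\<And>t. z t \<in> rel_interior Sz"
    and dom_Bz: "\<And>t. B *v z t \<in> rel_interior Sphi"
    and dom_cAx: "\<And>t. c - A *v x (Suc t) \<in> rel_interior Sphi"
    and dom_xs: "xs \<in> Sx" and dom_zs: "zs \<in> Sz" and dom_Bzs: "B *v zs \<in> Sphi"
    \<comment> \<open>x-update: x (t+1) is a minimizer (over the points of X where the divergences are defined)\<close>
    and x_step: "\<And>t. x (Suc t) \<in> X \<and>
        (\<forall>x'\<in>X. x' \<in> Sx \<longrightarrow> c - A *v x' \<in> Sphi \<longrightarrow>
          f (x (Suc t)) + ereal (y t \<bullet> (A *v x (Suc t) + B *v z t - c)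
              + \<rho> * bregman phi gphi (c - A *v x (Suc t)) (B *v z t)
              + \<rho>x * bregman phix gphix (x (Suc t)) (x t))
          \<le> f x' + ereal (y t \<bullet> (A *v x' + B *v z t - c)
              + \<rho> * bregman phi gphi (c - A *v x') (B *v z t)
              + \<rho>x * bregman phix gphix x' (x t)))"
    \<comment> \<open>z-update\<close>
    and z_step: "\<And>t. z (Suc t) \<in> Z \<and>
        (\<forall>z'\<in>Z. z' \<in> Sz \<longrightarrow> B *v z' \<in> Sphi \<longrightarrow>
          g (z (Suc t)) + ereal (y t \<bullet> (A *v x (Suc t) + B *v z (Suc t) - c)
              + \<rho> * bregman phi gphi (B *v z (Suc t)) (c - A *v x (Suc t))
              + \<rho>z * bregman phiz gphiz (z (Suc t)) (z t))
          \<le> g z' + ereal (y t \<bullet> (A *v x (Suc t) + B *v z' - c)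
              + \<rho> * bregman phi gphi (B *v z') (c - A *v x (Suc t))
              + \<rho>z * bregman phiz gphiz z' (z t)))"
    \<comment> \<open>y-update\<close>
    and y_step: "\<And>t. y (Suc t) = y t + \<tau> *\<^sub>R (A *v x (Suc t) + B *v z (Suc t) - c)"
    \<comment> \<open>first-order optimality conditions of the subproblems\<close>
    and foc_x: "\<And>t. - (transpose A *v (y t + \<rho> *\<^sub>R (gphi (B *v z t) - gphi (c - A *v x (Suc t)))))
          - \<rho>x *\<^sub>R (gphix (x (Suc t)) - gphix (x t)) \<in> subdiff f (x (Suc t))"
    and foc_z: "\<And>t. - (transpose B *v (y t + \<rho> *\<^sub>R (gphi (B *v z (Suc t)) - gphi (c - A *v x (Suc t)))))
          - \<rho>z *\<^sub>R (gphiz (z (Suc t)) - gphiz (z t)) \<in> subdiff g (z (Suc t))"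
    \<comment> \<open>bounded dual iterates\<close>
    and y_bdd: "\<And>t. norm (y t) \<le> Dy"
  shows "(\<Sum>t<T. c1 * bregman phix gphix (x (Suc t)) (x t)
                + c1 * bregman phiz gphiz (z (Suc t)) (z t)
                + bregman phi gphi (c - A *v x (Suc t)) (B *v z t)
                + \<gamma> * (norm (A *v x (Suc t) + B *v z (Suc t) - c))\<^sup>2)
         \<le> (1 / (2 * c2 * real T)) * (norm (ys - y 0))\<^sup>2
             + bregman phi gphi (B *v zs) (B *v z 0)
             + c1 * bregman phix gphix xs (x 0)
             + c1 * bregman phiz gphiz zs (z 0)
           + 4 * (c2 / 2 + \<gamma>) * Dy\<^sup>2 / c2\<^sup>2"
  proof -
  have Tpos: "real T > 0" using T_ge by simp
  define r where "r = sqrt (real T)"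
  have rpos: "r > 0" using Tpos by (simp add: r_def)
  have rr: "r * r = real T" using Tpos by (simp add: r_def)
  have fnm: "\<forall>u. f u \<noteq> -\<infinity>" using f_cpc by (simp add: proper_fun_def)
  have gnm: "\<forall>u. g u \<noteq> -\<infinity>" using g_cpc by (simp add: proper_fun_def)
  define Phi where "Phi = (\<lambda>t. (1 / (2 * c2 * real T)) * (norm (ys - y t))\<^sup>2
             + bregman phi gphi (B *v zs) (B *v z t)
             + c1 * bregman phix gphix xs (x t)
             + c1 * bregman phiz gphiz zs (z t))"
  define C where "C = 4 * (c2 / 2 + \<gamma>) * Dy\<^sup>2 / c2\<^sup>2"
  have step: "c1 * bregman phix gphix (x (Suc t)) (x t)
                + c1 * bregman phiz gphiz (z (Suc t)) (z t)
                + bregman phi gphi (c - A *v x (Suc t)) (B *v z t)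
                + \<gamma> * (norm (A *v x (Suc t) + B *v z (Suc t) - c))\<^sup>2
         \<le> Phi t - Phi (Suc t) + C / real T" for t
  proof -
    define a where "a = c - A *v x (Suc t)"
    define w where "w = B *v zs"
    define bt where "bt = B *v z t"
    define b1 where "b1 = B *v z (Suc t)"
    define res where "res = A *v x (Suc t) + B *v z (Suc t) - c"
    have HX0: "(- (transpose A *v ys)) \<bullet> (x (Suc t) - xs) +
       (- (transpose A *v (y t + \<rho> *\<^sub>R (gphi (B *v z t) - gphi (c - A *v x (Suc t)))))
          - \<rho>x *\<^sub>R (gphix (x (Suc t)) - gphix (x t))) \<bullet> (xs - x (Suc t)) \<le> 0"
      by (rule subdiff_pair[OF kkt_f foc_x fnm])
    have HX: "(y t - ys) \<bullet> (A *v x (Suc t) - A *v xs) + \<rho> * ((gphi bt - gphi a) \<bullet> (A *v x (Suc t) - A *v xs))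
       + \<rho>x * ((gphix (x (Suc t)) - gphix (x t)) \<bullet> (x (Suc t) - xs)) \<le> 0"
      using HX0 unfolding a_def bt_def
      by (simp add: transp_inner dot_lmul_matrix inner_diff_left inner_diff_right inner_add_left inner_add_right
          matrix_vector_mult_diff_distrib algebra_simps)
    have HZ0: "(- (transpose B *v ys)) \<bullet> (z (Suc t) - zs) +
       (- (transpose B *v (y t + \<rho> *\<^sub>R (gphi (B *v z (Suc t)) - gphi (c - A *v x (Suc t)))))
          - \<rho>z *\<^sub>R (gphiz (z (Suc t)) - gphiz (z t))) \<bullet> (zs - z (Suc t)) \<le> 0"
      by (rule subdiff_pair[OF kkt_g foc_z gnm])
    have HZ: "(y t - ys) \<bullet> (b1 - w) + \<rho> * ((gphi b1 - gphi a) \<bullet> (b1 - w))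
       + \<rho>z * ((gphiz (z (Suc t)) - gphiz (z t)) \<bullet> (z (Suc t) - zs)) \<le> 0"
      using HZ0 unfolding a_def b1_def w_def
      by (simp add: transp_inner dot_lmul_matrix inner_diff_left inner_diff_right inner_add_left inner_add_right
          matrix_vector_mult_diff_distrib algebra_simps)
    have ux: "A *v x (Suc t) - A *v xs = w - a"
      using kkt_feas unfolding a_def w_def by (simp add: algebra_simps)
    have E1: "(gphi bt - gphi a) \<bullet> (w - a) = bregman phi gphi w a + bregman phi gphi a bt - bregman phi gphi w bt"
      by (rule three_point)
    have E2: "(gphi b1 - gphi a) \<bullet> (b1 - w) = bregman phi gphi w b1 + bregman phi gphi b1 a - bregman phi gphi w a"
    proof -
      have "(gphi b1 - gphi a) \<bullet> (b1 - w) = (gphi a - gphi b1) \<bullet> (w - b1)"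
        by (simp add: inner_diff_left inner_diff_right algebra_simps)
      also have "\<dots> = bregman phi gphi w b1 + bregman phi gphi b1 a - bregman phi gphi w a"
        by (rule three_point)
      finally show ?thesis .
    qed
    have E3: "(gphix (x (Suc t)) - gphix (x t)) \<bullet> (x (Suc t) - xs) = bregman phix gphix xs (x (Suc t))
        + bregman phix gphix (x (Suc t)) (x t) - bregman phix gphix xs (x t)"
    proof -
      have "(gphix (x (Suc t)) - gphix (x t)) \<bullet> (x (Suc t) - xs) = (gphix (x t) - gphix (x (Suc t))) \<bullet> (xs - x (Suc t))"
        by (simp add: inner_diff_left inner_diff_right algebra_simps)
      also have "\<dots> = bregman phix gphix xs (x (Suc t)) + bregman phix gphix (x (Suc t)) (x t) - bregman phix gphix xs (x t)" by (rule three_point)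
      finally show ?thesis .
    qed
    have E4: "(gphiz (z (Suc t)) - gphiz (z t)) \<bullet> (z (Suc t) - zs) = bregman phiz gphiz zs (z (Suc t))
        + bregman phiz gphiz (z (Suc t)) (z t) - bregman phiz gphiz zs (z t)"
    proof -
      have "(gphiz (z (Suc t)) - gphiz (z t)) \<bullet> (z (Suc t) - zs) = (gphiz (z t) - gphiz (z (Suc t))) \<bullet> (zs - z (Suc t))"
        by (simp add: inner_diff_left inner_diff_right algebra_simps)
      also have "\<dots> = bregman phiz gphiz zs (z (Suc t)) + bregman phiz gphiz (z (Suc t)) (z t) - bregman phiz gphiz zs (z t)" by (rule three_point)
      finally show ?thesis .
    qed
    have resd: "res = (A *v x (Suc t) - A *v xs) + (b1 - w)"
      using kkt_feas unfolding res_def b1_def w_def by (simp add: algebra_simps)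
    have HS: "(y t - ys) \<bullet> res + \<rho> * (bregman phi gphi a bt - bregman phi gphi w bt
          + bregman phi gphi w b1 + bregman phi gphi b1 a)
        + \<rho>x * (bregman phix gphix xs (x (Suc t)) + bregman phix gphix (x (Suc t)) (x t) - bregman phix gphix xs (x t))
        + \<rho>z * (bregman phiz gphiz zs (z (Suc t)) + bregman phiz gphiz (z (Suc t)) (z t) - bregman phiz gphiz zs (z t)) \<le> 0"
    proof -
      have "(y t - ys) \<bullet> res = (y t - ys) \<bullet> (A *v x (Suc t) - A *v xs) + (y t - ys) \<bullet> (b1 - w)"
        by (simp add: resd inner_add_right)
      thus ?thesis using HX HZ unfolding ux E1 E2 E3 E4 by (simp add: algebra_simps)
    qed
    have yd: "y (Suc t) - ys = (y t - ys) + \<tau> *\<^sub>R res"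
      using y_step[of t] unfolding res_def by simp
    have N1: "(norm (y (Suc t) - ys))\<^sup>2 = (norm (y t - ys))\<^sup>2 + 2 * \<tau> * ((y t - ys) \<bullet> res) + \<tau>\<^sup>2 * (norm res)\<^sup>2"
      unfolding yd power2_norm_eq_inner
      by (simp add: inner_add_left inner_add_right inner_commute power2_eq_square algebra_simps)
    have tpos: "\<tau> > 0" using \<tau>_def c2_pos rpos r_def by simp
    have Kb: "\<tau>\<^sup>2 * (norm res)\<^sup>2 \<le> 4 * Dy\<^sup>2"
    proof -
      have "\<tau> *\<^sub>R res = y (Suc t) - y t" using y_step[of t] unfolding res_def by simp
      hence "\<tau> * norm res = norm (y (Suc t) - y t)" using tpos by (metis abs_of_pos norm_scaleR)
      also have "\<dots> \<le> norm (y (Suc t)) + norm (y t)" by (rule norm_triangle_ineq4)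
      also have "\<dots> \<le> 2 * Dy" using y_bdd[of t] y_bdd[of "Suc t"] by simp
      finally have h: "\<tau> * norm res \<le> 2 * Dy" .
      have "0 \<le> \<tau> * norm res" using tpos by simp
      hence "(\<tau> * norm res)\<^sup>2 \<le> (2 * Dy)\<^sup>2" using h by (metis power_mono)
      thus ?thesis by (simp add: power_mult_distrib)
    qed
    have nn: "bregman phi gphi b1 a \<ge> 0"
      unfolding a_def b1_def
      by (rule bregman_nonneg[OF gen_phi _ dom_cAx]) (use dom_Bz rel_interior_subset in blast)
    define d where "d = (y t - ys) \<bullet> res"
    define K where "K = (norm res)\<^sup>2"
    define N0 where "N0 = (norm (ys - y t))\<^sup>2"
    define N1 where "N1 = (norm (ys - y (Suc t)))\<^sup>2"
    have N1': "N1 = N0 + 2 * \<tau> * d + \<tau>\<^sup>2 * K"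
      using N1 unfolding N0_def N1_def d_def K_def by (simp add: norm_minus_commute)
    have rho: "\<rho> = r" and rhox: "\<rho>x = c1 * r" and rhoz: "\<rho>z = c1 * r" and tau: "\<tau> = c2 * r"
      using \<rho>_def \<rho>x_def \<rho>z_def \<tau>_def r_def by auto
    have HS': "d / r + (bregman phi gphi a bt - bregman phi gphi w bt
          + bregman phi gphi w b1 + bregman phi gphi b1 a)
        + c1 * (bregman phix gphix xs (x (Suc t)) + bregman phix gphix (x (Suc t)) (x t) - bregman phix gphix xs (x t))
        + c1 * (bregman phiz gphiz zs (z (Suc t)) + bregman phiz gphiz (z (Suc t)) (z t) - bregman phiz gphiz zs (z t)) \<le> 0"
      (is "?L \<le> 0")
    proof -
      have "r * ?L \<le> 0" using HS rpos unfolding rho rhox rhoz d_def[symmetric]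
        by (simp add: algebra_simps)
      thus ?thesis using rpos by (simp add: mult_le_0_iff)
    qed
    have dd: "d / r = (N1 - N0) / (2 * c2 * real T) - c2 * K / 2"
      using rpos c2_pos unfolding N1' tau rr[symmetric] by (simp add: field_simps power2_eq_square)
    have Kb2: "K \<le> 4 * Dy\<^sup>2 / (c2\<^sup>2 * real T)"
    proof -
      have "c2\<^sup>2 * real T * K \<le> 4 * Dy\<^sup>2" using Kb unfolding tau K_def
        by (simp add: power_mult_distrib rr[symmetric] power2_eq_square algebra_simps)
      thus ?thesis using c2_pos Tpos by (simp add: field_simps)
    qed
    have KC: "(c2 / 2 + \<gamma>) * K \<le> C / real T"
    proof -
      have "(c2 / 2 + \<gamma>) * K \<le> (c2 / 2 + \<gamma>) * (4 * Dy\<^sup>2 / (c2\<^sup>2 * real T))"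
        using Kb2 c2_pos \<gamma>_pos by (intro mult_left_mono) auto
      thus ?thesis unfolding C_def by (simp add: field_simps)
    qed
    have PhiD: "Phi t - Phi (Suc t) = (N0 - N1) / (2 * c2 * real T)
             + bregman phi gphi w bt - bregman phi gphi w b1
             + c1 * (bregman phix gphix xs (x t) - bregman phix gphix xs (x (Suc t)))
             + c1 * (bregman phiz gphiz zs (z t) - bregman phiz gphiz zs (z (Suc t)))"
      unfolding Phi_def N0_def N1_def w_def bt_def b1_def by (simp add: diff_divide_distrib algebra_simps)
    have e1: "d / r + bregman phi gphi a bt - bregman phi gphi w bt
          + bregman phi gphi w b1 + bregman phi gphi b1 a
        + c1 * bregman phix gphix xs (x (Suc t)) + c1 * bregman phix gphix (x (Suc t)) (x t) - c1 * bregman phix gphix xs (x t)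
        + c1 * bregman phiz gphiz zs (z (Suc t)) + c1 * bregman phiz gphiz (z (Suc t)) (z t) - c1 * bregman phiz gphiz zs (z t) \<le> 0"
      using HS' by (simp add: algebra_simps)
    have e2: "c2 * K / 2 + \<gamma> * K \<le> C / real T" using KC by (simp add: algebra_simps)
    have e3: "(N0 - N1) / (2 * c2 * real T) = - ((N1 - N0) / (2 * c2 * real T))"
      by (metis minus_diff_eq minus_divide_left)
    have e4: "Phi t - Phi (Suc t) = (N0 - N1) / (2 * c2 * real T)
             + bregman phi gphi w bt - bregman phi gphi w b1
             + c1 * bregman phix gphix xs (x t) - c1 * bregman phix gphix xs (x (Suc t))
             + c1 * bregman phiz gphiz zs (z t) - c1 * bregman phiz gphiz zs (z (Suc t))"
      using PhiD by (simp add: algebra_simps)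
    have G: "c1 * bregman phix gphix (x (Suc t)) (x t)
                + c1 * bregman phiz gphiz (z (Suc t)) (z t)
                + bregman phi gphi a bt + \<gamma> * K \<le> Phi t - Phi (Suc t) + C / real T"
      using e1 e2 e3 e4 dd nn by linarith
    show ?thesis using G unfolding a_def bt_def K_def res_def .
  qed
  have PhiT: "Phi T \<ge> 0"
  proof -
    have "bregman phi gphi (B *v zs) (B *v z T) \<ge> 0" by (rule bregman_nonneg[OF gen_phi dom_Bzs dom_Bz])
    moreover have "bregman phix gphix xs (x T) \<ge> 0" by (rule bregman_nonneg[OF gen_phix dom_xs dom_x])
    moreover have "bregman phiz gphiz zs (z T) \<ge> 0" by (rule bregman_nonneg[OF gen_phiz dom_zs dom_z])
    ultimately show ?thesis unfolding Phi_def using c1_pos c2_pos Tpos by simp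
  qed
  have "(\<Sum>t<T. c1 * bregman phix gphix (x (Suc t)) (x t)
                + c1 * bregman phiz gphiz (z (Suc t)) (z t)
                + bregman phi gphi (c - A *v x (Suc t)) (B *v z t)
                + \<gamma> * (norm (A *v x (Suc t) + B *v z (Suc t) - c))\<^sup>2)
        \<le> (\<Sum>t<T. (Phi t - Phi (Suc t)) + C / real T)"
    by (rule sum_mono) (rule step)
  also have "\<dots> = Phi 0 - Phi T + C"
    using Tpos by (simp add: sum.distrib sum_lessThan_telescope')
  also have "\<dots> \<le> Phi 0 + C" using PhiT by simp
  finally show ?thesis unfolding Phi_def C_def by simp
qed

end
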